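(* Let $q$ be a prime power and let $r\ge2$ and $n$ be even with $n=2m+r$, $m\ge0$. Then $$\frac{p_r(q,n)}{p_0(q,n)}=\frac{c_r(q,n)}{c_0(q,n)}=\frac{q^{r/2}}{\prod_{j=1}^{r}(q^j-1)}\cdot\prod_{j=1}^{r/2}\left(1-\frac{1}{q^{m+j}}\right).$$ In particular, for fixed even $n$ and even $r\ge2$, $p_r(q,n)/p_0(q,n)\sim q^{-r^2/2}$ as $q\to\infty$.
   Context: Let ${\mathbb F}_q$ be the finite field of order $q$. A differential on ${\mathbb F}_q^n$ is a linear map $D$ with $D^2=0$; its homology is $\ker D/\operatorname{im}D$. Let $c(q,n)$ be the number of differentials on ${\mathbb F}_q^n$, $c_r(q,n)$ the number with $r$-dimensional homology, and $p_r(q,n)=c_r(q,n)/c(q,n)$. *)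

theory Defs
  imports "HOL-Analysis.Analysis"
begin

text \<open>Linear maps on F_q^n are represented by n x n matrices over the finite field 'a
  (q = CARD('a), n = CARD('n)). A differential is D with D D = 0.\<close>

definition is_differential :: "'a::field^'n^'n \<Rightarrow> bool" where
  "is_differential D \<longleftrightarrow> D ** D = 0"

text \<open>Dimension of the homology ker D / im D, i.e. dim ker D - dim im D.\<close>
definition homology_dim :: "'a::field^'n^'n \<Rightarrow> nat" where
  "homology_dim D = vec.dim {x. D *v x = 0} - vec.dim (range (\<lambda>x. D *v x))"

definition c_all :: "('a::{field,finite}^'n::finite^'n) itself \<Rightarrow> nat" where
  "c_all _ = card {D :: 'a^'n^'n. is_differential D}"

definition c_hom :: "('a::{field,finite}^'n::finite^'n) itself \<Rightarrow> nat \<Rightarrow> nat" where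
  "c_hom _ r = card {D :: 'a^'n^'n. is_differential D \<and> homology_dim D = r}"

definition p_hom :: "('a::{field,finite}^'n::finite^'n) itself \<Rightarrow> nat \<Rightarrow> real" where
  "p_hom T r = real (c_hom T r) / real (c_all T)"

definition ratio_formula :: "real \<Rightarrow> nat \<Rightarrow> nat \<Rightarrow> real" where
  "ratio_formula q m r =
     q ^ (r div 2) / (\<Prod>j=1..r. q ^ j - 1) * (\<Prod>j=1..r div 2. 1 - 1 / q ^ (m + j))"

end

theory Submission
  imports Defs
begin

lemma card_span_indep:
  fixes B :: "('a::{field,finite}^'n::finite) set"
  assumes "vec.independent B"
  shows "card (vec.span B) = CARD('a) ^ card B"
proof -
  have "finite B" using assms vec.finiteI_independent by blast
  then show ?thesis using assms
  proof (induction B rule: finite_induct)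
    case empty
    then show ?case by simp
  next
    case (insert x B)
    have iB: "vec.independent B" using insert.prems vec.independent_mono by blast
    have xn: "x \<notin> vec.span B" using insert.prems insert.hyps(2) by (simp add: vec.independent_insert)
    let ?f = "\<lambda>(c::'a, v). c *s x + v"
    have inj: "inj_on ?f (UNIV \<times> vec.span B)"
    proof (rule inj_onI, clarify)
      fix c v c' v'
      assume v: "v \<in> vec.span B" and v': "v' \<in> vec.span B" and eq: "c *s x + v = c' *s x + v'"
      have "(c - c') *s x = v' - v" using eq by (simp add: algebra_simps vector_sub_rdistrib)
      moreover have "v' - v \<in> vec.span B" using v v' vec.span_diff by blast
      ultimately have cc: "c = c'"
        using xn vec.span_scale[of "(c - c') *s x" B "inverse (c - c')"]
        by (metis eq_iff_diff_eq_0 left_inverse vec.scale_one vec.scale_scale)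
      then show "c = c' \<and> v = v'" using eq by simp
    qed
    have img: "?f ` (UNIV \<times> vec.span B) = vec.span (insert x B)"
    proof
      show "?f ` (UNIV \<times> vec.span B) \<subseteq> vec.span (insert x B)"
      proof clarify
        fix c v assume "v \<in> vec.span B"
        then have "v \<in> vec.span (insert x B)" using vec.span_mono[of B "insert x B"] by blast
        moreover have "c *s x \<in> vec.span (insert x B)" by (intro vec.span_scale vec.span_base) simp
        ultimately show "c *s x + v \<in> vec.span (insert x B)" using vec.span_add by blast
      qed
    next
      show "vec.span (insert x B) \<subseteq> ?f ` (UNIV \<times> vec.span B)"
      proof
        fix y assume "y \<in> vec.span (insert x B)"
        then obtain k where "y - k *s x \<in> vec.span B" using vec.span_insert by blast
        then show "y \<in> ?f ` (UNIV \<times> vec.span B)"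
          by (intro image_eqI[of _ _ "(k, y - k *s x)"]) auto
      qed
    qed
    have "card (vec.span (insert x B)) = card ((UNIV::'a set) \<times> vec.span B)"
      using card_image[OF inj] unfolding img .
    also have "\<dots> = CARD('a) * card (vec.span B)" by (simp add: card_cartesian_product)
    also have "\<dots> = CARD('a) ^ card (insert x B)" using insert iB by simp
    finally show ?case .
  qed
qed

lemma card_subspace:
  fixes S :: "('a::{field,finite}^'n::finite) set"
  assumes "vec.subspace S"
  shows "card S = CARD('a) ^ vec.dim S"
proof -
  obtain B where B: "B \<subseteq> S" "vec.independent B" "S \<subseteq> vec.span B" "card B = vec.dim S"
    using vec.basis_exists by blast
  have "vec.span B = S" using B assms vec.span_subspace by blast
  then show ?thesis using card_span_indep[OF B(2)] B(4) by simp
qed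

definition li :: "('a::field^'n) list \<Rightarrow> bool" where
  "li xs \<longleftrightarrow> distinct xs \<and> vec.independent (set xs)"

lemma li_snoc: "li (xs @ [x]) \<longleftrightarrow> li xs \<and> x \<notin> vec.span (set xs)"
  unfolding li_def
  by (auto simp: vec.independent_insert vec.span_base)

lemma li_append: "li (xs @ ys) \<Longrightarrow> li xs \<and> li ys"
  unfolding li_def using vec.independent_mono[of "set xs \<union> set ys"] by auto

lemma card_span_li: "li xs \<Longrightarrow> card (vec.span (set (xs::('a::{field,finite}^'n::finite) list))) = CARD('a) ^ length xs"
  unfolding li_def using card_span_indep distinct_card by metis

lemma finite_lists_fin: "finite {g::('b::finite) list. length g = l \<and> P g}"
  by (rule finite_subset[OF _ finite_lists_length_eq[of "UNIV::'b set" l]]) auto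

lemma count_ext:
  fixes S :: "('a::{field,finite}^'n::finite) set"
  assumes S: "vec.subspace S" and AS: "set A \<subseteq> S" and liA: "li A"
  shows "card {g. length g = l \<and> set g \<subseteq> S \<and> li (A @ g)}
       = (\<Prod>i<l. CARD('a) ^ vec.dim S - CARD('a) ^ (length A + i))"
proof (induction l)
  case 0
  have "{g. length g = 0 \<and> set g \<subseteq> S \<and> li (A @ g)} = {[]}" using liA by auto
  then show ?case by simp
next
  case (Suc l)
  let ?G = "\<lambda>l. {g. length g = l \<and> set g \<subseteq> S \<and> li (A @ g)}"
  let ?T = "\<lambda>g. S - vec.span (set (A @ g))"
  have eq: "?G (Suc l) = (\<lambda>(g,x). g @ [x]) ` (SIGMA g:?G l. ?T g)"
  proof
    show "?G (Suc l) \<subseteq> (\<lambda>(g,x). g @ [x]) ` (SIGMA g:?G l. ?T g)"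
    proof
      fix h assume h: "h \<in> ?G (Suc l)"
      then obtain g x where hg: "h = g @ [x]"
        by (metis (mono_tags, lifting) length_Suc_conv_rev mem_Collect_eq)
      have "li ((A @ g) @ [x])" using h hg by simp
      then have "li (A @ g)" "x \<notin> vec.span (set (A @ g))" using li_snoc by blast+
      then show "h \<in> (\<lambda>(g,x). g @ [x]) ` (SIGMA g:?G l. ?T g)"
        using h hg by (auto intro!: image_eqI[of _ _ "(g,x)"])
    qed
  next
    show "(\<lambda>(g,x). g @ [x]) ` (SIGMA g:?G l. ?T g) \<subseteq> ?G (Suc l)"
    proof
      fix h assume "h \<in> (\<lambda>(g,x). g @ [x]) ` (SIGMA g:?G l. ?T g)"
      then obtain p where p: "p \<in> (SIGMA g:?G l. ?T g)" and hp: "h = (\<lambda>(g,x). g @ [x]) p" by (rule imageE)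
      obtain g x where pgx: "p = (g, x)" by (cases p)
      have g: "g \<in> ?G l" and x: "x \<in> ?T g" using p unfolding pgx by (rule SigmaD1, rule SigmaD2)
      have h: "h = g @ [x]" using hp pgx by simp
      have "li ((A @ g) @ [x])" using g x li_snoc by blast
      then show "h \<in> ?G (Suc l)" using g x h by simp
    qed
  qed
  have inj: "inj_on (\<lambda>(g,x). g @ [x]) (SIGMA g:?G l. ?T g)"
    by (rule inj_onI) auto
  have cT: "card (?T g) = CARD('a) ^ vec.dim S - CARD('a) ^ (length A + l)" if g: "g \<in> ?G l" for g
  proof -
    have sub: "vec.span (set (A @ g)) \<subseteq> S"
    proof -
      have "set (A @ g) \<subseteq> S" using g AS by auto
      then show ?thesis using vec.span_minimal[OF _ S] by blast
    qed
    have "card (?T g) = card S - card (vec.span (set (A @ g)))"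
      using sub by (simp add: card_Diff_subset)
    also have "\<dots> = CARD('a) ^ vec.dim S - CARD('a) ^ (length A + l)"
      using card_subspace[OF S] card_span_li[of "A @ g"] g by simp
    finally show ?thesis .
  qed
  have "card (?G (Suc l)) = card (SIGMA g:?G l. ?T g)"
    unfolding eq using card_image[OF inj] .
  also have "\<dots> = (\<Sum>g\<in>?G l. card (?T g))"
    by (rule card_SigmaI) (auto intro: finite_lists_fin)
  also have "\<dots> = card (?G l) * (CARD('a) ^ vec.dim S - CARD('a) ^ (length A + l))"
    using cT by simp
  also have "\<dots> = (\<Prod>i<Suc l. CARD('a) ^ vec.dim S - CARD('a) ^ (length A + i))"
    using Suc.IH by simp
  finally show ?case .
qed

lemma finite_lists_len: "finite {g::('b::finite) list. length g = l}"
  using finite_lists_fin[of l "\<lambda>_. True"] by simp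

lemma card_field_ge2: "CARD('a::{field,finite}) \<ge> 2"
proof -
  have "card {0::'a, 1} = 2" by simp
  moreover have "card {0::'a, 1} \<le> CARD('a)" by (rule card_mono) auto
  ultimately show ?thesis by simp
qed

lemma dim_UNIV_n: "vec.dim (UNIV::('a::field^'n::finite) set) = CARD('n)"
  by (simp add: card_cart_basis)

lemma card_UNIV_vec: "card (UNIV::('a::{field,finite}^'n::finite) set) = CARD('a) ^ CARD('n)"
  using card_subspace[OF vec.subspace_UNIV] dim_UNIV_n by metis

lemma card_fiber:
  fixes D :: "'a::{field,finite}^'n::finite^'m::finite"
  assumes "y \<in> range ((*v) D)"
  shows "card {x. D *v x = y} = card {x. D *v x = 0}"
proof -
  obtain x0 where x0: "D *v x0 = y" using assms by auto
  have inj: "inj_on (\<lambda>z. x0 + z) {x. D *v x = 0}" by (rule inj_onI) simp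
  have "(\<lambda>z. x0 + z) ` {x. D *v x = 0} = {x. D *v x = y}"
  proof
    show "(\<lambda>z. x0 + z) ` {x. D *v x = 0} \<subseteq> {x. D *v x = y}"
      using x0 by (auto simp: matrix_vector_right_distrib)
    show "{x. D *v x = y} \<subseteq> (\<lambda>z. x0 + z) ` {x. D *v x = 0}"
    proof
      fix x assume "x \<in> {x. D *v x = y}"
      then have "D *v (x - x0) = 0" using x0 by (simp add: vec.diff)
      then show "x \<in> (\<lambda>z. x0 + z) ` {x. D *v x = 0}"
        by (intro image_eqI[of _ _ "x - x0"]) auto
    qed
  qed
  then show ?thesis using card_image[OF inj] by simp
qed

lemma rank_nullity:
  fixes D :: "'a::{field,finite}^'n::finite^'m::finite"
  shows "vec.dim {x. D *v x = 0} + vec.dim (range ((*v) D)) = CARD('n)"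
proof -
  let ?K = "{x. D *v x = 0}" and ?I = "range ((*v) D)"
  have U: "UNIV = (\<Union>y\<in>?I. {x. D *v x = y})" by auto
  have "card (UNIV::('a^'n) set) = (\<Sum>y\<in>?I. card {x. D *v x = y})"
    by (subst U, rule card_UN_disjoint) auto
  also have "\<dots> = card ?I * card ?K" using card_fiber[of _ D] by simp
  also have "\<dots> = CARD('a) ^ (vec.dim ?K + vec.dim ?I)"
    using card_subspace[OF vec.subspace_kernel[of D]] card_subspace[OF vec.subspace_image[OF vec.subspace_UNIV, of D]]
    by (simp add: power_add mult.commute)
  finally have "CARD('a) ^ CARD('n) = CARD('a) ^ (vec.dim ?K + vec.dim ?I)"
    using card_UNIV_vec by metis
  then show ?thesis using card_field_ge2[where 'a='a] power_inject_exp[of "CARD('a)"]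
    by (metis Suc_1 Suc_le_lessD)
qed

lemma sqz: "D ** D = 0 \<Longrightarrow> D *v (D *v x) = 0"
  by (simp add: matrix_vector_mul_assoc)

lemma im_sub_ker: "D ** D = 0 \<Longrightarrow> range ((*v) D) \<subseteq> {x. D *v x = 0}"
  using sqz by auto

lemma card_preimage_list:
  fixes D :: "'a::{field,finite}^'n::finite^'m::finite"
  assumes "set ys \<subseteq> range ((*v) D)"
  shows "card {f. map ((*v) D) f = ys} = card {x. D *v x = 0} ^ length ys"
  using assms
proof (induction ys)
  case Nil
  then show ?case by simp
next
  case (Cons y ys)
  have eq: "{f. map ((*v) D) f = y # ys} = (\<lambda>(x,f). x # f) ` ({x. D *v x = y} \<times> {f. map ((*v) D) f = ys})"
    by (auto simp: Cons_eq_map_conv)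
  have inj: "inj_on (\<lambda>(x,f). x # f) ({x. D *v x = y} \<times> {f. map ((*v) D) f = ys})"
    by (rule inj_onI) auto
  have "card {f. map ((*v) D) f = y # ys} = card {x. D *v x = y} * card {f. map ((*v) D) f = ys}"
    unfolding eq card_image[OF inj] by (simp add: card_cartesian_product)
  also have "\<dots> = card {x. D *v x = 0} ^ length (y # ys)"
    using Cons card_fiber[of y D] by simp
  finally show ?case .
qed

lemma count_F:
  fixes D :: "'a::{field,finite}^'n::finite^'n"
  assumes k: "vec.dim (range ((*v) D)) = k"
  shows "card {f. length f = k \<and> li (map ((*v) D) f)}
      = CARD('a) ^ ((CARD('n) - k) * k) * (\<Prod>i<k. CARD('a) ^ k - CARD('a) ^ i)"
proof -
  let ?h = "(*v) D"
  let ?Y = "{ys. length ys = k \<and> set ys \<subseteq> range ?h \<and> li ([] @ ys)}"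
  have cY: "card ?Y = (\<Prod>i<k. CARD('a) ^ k - CARD('a) ^ i)"
    using count_ext[OF vec.subspace_image[OF vec.subspace_UNIV, of D], where A="[]" and l=k] k
    by (simp add: li_def vec.independent_empty)
  have eq: "{f. length f = k \<and> li (map ?h f)} = (\<Union>ys\<in>?Y. {f. map ?h f = ys})"
    by auto
  have dk: "vec.dim {x. D *v x = 0} = CARD('n) - k" using rank_nullity[of D] k by simp
  have fin: "finite {f. map ?h f = ys}" for ys
    by (rule finite_subset[of _ "{f. length f = length ys}"]) (auto intro: finite_lists_len)
  have finY: "finite ?Y" using finite_lists_fin by auto
  have "card {f. length f = k \<and> li (map ?h f)} = (\<Sum>ys\<in>?Y. card {f. map ?h f = ys})"
    unfolding eq using fin finY by (intro card_UN_disjoint) auto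
  also have "\<dots> = (\<Sum>ys\<in>?Y. CARD('a) ^ ((CARD('n) - k) * k))"
    by (rule sum.cong) (auto simp: card_preimage_list card_subspace[OF vec.subspace_kernel] dk power_mult)
  also have "\<dots> = CARD('a) ^ ((CARD('n) - k) * k) * (\<Prod>i<k. CARD('a) ^ k - CARD('a) ^ i)"
    using cY by simp
  finally show ?thesis .
qed

lemma key_li:
  fixes D :: "'a::{field,finite}^'n::finite^'n"
  assumes sq: "D ** D = 0" and k: "vec.dim (range ((*v) D)) = k"
    and f: "length f = k" "li (map ((*v) D) f)"
    and g: "length g = CARD('n) - 2*k" "set g \<subseteq> {x. D *v x = 0}" "li (map ((*v) D) f @ g)"
  shows "li (f @ map ((*v) D) f @ g)"
proof -
  let ?h = "(*v) D"
  let ?E = "set (map ?h f @ g)"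
  let ?K = "{x. D *v x = 0}" and ?I = "range ((*v) D)"
  let ?P = "f @ map ?h f @ g"
  have dK: "vec.dim ?K = CARD('n) - k" using rank_nullity[of D] k by simp
  have "vec.dim ?I \<le> vec.dim ?K" using im_sub_ker[OF sq] vec.dim_subset by blast
  then have kn: "2 * k \<le> CARD('n)" using dK k by simp
  have EK: "?E \<subseteq> ?K" using g(2) sqz[OF sq] by auto
  have indE: "vec.independent ?E" and distE: "distinct (map ?h f @ g)" using g(3) unfolding li_def by auto
  have cardE: "card ?E = CARD('n) - k" using distinct_card[OF distE] f g kn by simp
  have KE: "?K \<subseteq> vec.span ?E"
    by (rule vec.card_ge_dim_independent[OF EK indE]) (metis dK cardE order_refl)
  have IF: "?I \<subseteq> vec.span (set (map ?h f))"
  proof (rule vec.card_ge_dim_independent)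
    show "set (map ?h f) \<subseteq> ?I" by auto
    show "vec.independent (set (map ?h f))" using f(2) unfolding li_def by auto
    show "vec.dim ?I \<le> card (set (map ?h f))" using f(2) unfolding li_def
      using distinct_card f(1) k by fastforce
  qed
  have span: "UNIV \<subseteq> vec.span (set ?P)"
  proof
    fix v :: "'a^'n"
    have "?h v \<in> vec.span (?h ` set f)" using IF by auto
    then have "?h v \<in> ?h ` vec.span (set f)" by (simp add: vec.span_image)
    then obtain w where w: "w \<in> vec.span (set f)" "?h w = ?h v" by auto
    have "D *v (v - w) = 0" using w(2) by (simp add: vec.diff)
    then have "v - w \<in> vec.span ?E" using KE by auto
    then have 1: "v - w \<in> vec.span (set ?P)" using vec.span_mono[of ?E "set ?P"] by auto
    have 2: "w \<in> vec.span (set ?P)" using w(1) vec.span_mono[of "set f" "set ?P"] by auto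
    have "w + (v - w) \<in> vec.span (set ?P)" using 1 2 vec.span_add by blast
    then show "v \<in> vec.span (set ?P)" by simp
  qed
  have lenP: "length ?P = CARD('n)" using f g kn by simp
  have "card (set ?P) \<le> CARD('n)" using card_length[of ?P] lenP by simp
  then have ind: "vec.independent (set ?P)"
    using vec.card_le_dim_spanning[of "set ?P" UNIV] span by (auto simp: card_cart_basis)
  have "CARD('n) \<le> card (set ?P)"
    using vec.span_card_ge_dim[of "set ?P" UNIV] span by (auto simp: card_cart_basis)
  then have "distinct ?P" using card_length[of ?P] lenP card_distinct by (metis antisym)
  then show ?thesis using ind unfolding li_def by simp
qed

definition relk :: "nat \<Rightarrow> 'a::field^'n^'n \<Rightarrow> ('a^'n) list \<Rightarrow> bool" where
  "relk k D P \<longleftrightarrow> map ((*v) D) (take k P) = take k (drop k P) \<and> (\<forall>x\<in>set (drop k P). D *v x = 0)"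

lemma two_k_le:
  fixes D :: "'a::{field,finite}^'n::finite^'n"
  assumes sq: "D ** D = 0" and k: "vec.dim (range ((*v) D)) = k"
  shows "2 * k \<le> CARD('n)"
proof -
  have dK: "vec.dim {x. D *v x = 0} = CARD('n) - k" using rank_nullity[of D] k by simp
  have "vec.dim (range ((*v) D)) \<le> vec.dim {x. D *v x = 0}" using im_sub_ker[OF sq] vec.dim_subset by blast
  then show ?thesis using dK k rank_nullity[of D] by simp
qed

lemma fiber_count:
  fixes D :: "'a::{field,finite}^'n::finite^'n"
  assumes sq: "D ** D = 0" and k: "vec.dim (range ((*v) D)) = k"
  shows "card {P. length P = CARD('n) \<and> li P \<and> relk k D P}
      = card {f. length f = k \<and> li (map ((*v) D) f)}
        * (\<Prod>i<CARD('n) - 2*k. CARD('a) ^ (CARD('n) - k) - CARD('a) ^ (k + i))"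
proof -
  let ?h = "(*v) D"
  let ?K = "{x. D *v x = 0}"
  let ?F = "{f. length f = k \<and> li (map ?h f)}"
  let ?G = "\<lambda>f. {g. length g = CARD('n) - 2*k \<and> set g \<subseteq> ?K \<and> li (map ?h f @ g)}"
  let ?X = "{P. length P = CARD('n) \<and> li P \<and> relk k D P}"
  let ?m = "\<lambda>(f,g). f @ map ?h f @ g"
  have kn: "2 * k \<le> CARD('n)" using two_k_le[OF sq k] .
  have dK: "vec.dim ?K = CARD('n) - k" using rank_nullity[of D] k by simp
  have eq: "?X = ?m ` (SIGMA f:?F. ?G f)"
  proof
    show "?X \<subseteq> ?m ` (SIGMA f:?F. ?G f)"
    proof
      fix P assume P: "P \<in> ?X"
      let ?f = "take k P" and ?g = "drop k (drop k P)"
      have rel: "map ?h ?f = take k (drop k P)" "\<forall>x\<in>set (drop k P). D *v x = 0"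
        using P unfolding relk_def by auto
      have Pd: "P = ?f @ map ?h ?f @ ?g" unfolding rel(1) by (metis append_take_drop_id)
      have liP: "li (?f @ map ?h ?f @ ?g)" using P Pd by simp
      have l1: "li (map ?h ?f @ ?g)" using li_append[OF liP] by blast
      have l2: "li (map ?h ?f)" using li_append[OF l1] by blast
      have lf: "length ?f = k" using P kn by simp
      have lg: "length ?g = CARD('n) - 2*k" using P by simp
      have gK: "set ?g \<subseteq> ?K" using rel(2) set_drop_subset[of k "drop k P"] by auto
      show "P \<in> ?m ` (SIGMA f:?F. ?G f)"
        using lf l2 lg gK l1 Pd by (intro image_eqI[of _ _ "(?f, ?g)"]) auto
    qed
  next
    show "?m ` (SIGMA f:?F. ?G f) \<subseteq> ?X"
    proof
      fix P assume "P \<in> ?m ` (SIGMA f:?F. ?G f)"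
      then obtain p where p: "p \<in> (SIGMA f:?F. ?G f)" and hp: "P = ?m p" by (rule imageE)
      obtain f g where pfg: "p = (f, g)" by (cases p)
      have fF: "f \<in> ?F" and gG: "g \<in> ?G f" using p unfolding pfg by (rule SigmaD1, rule SigmaD2)
      have P: "P = f @ map ?h f @ g" using hp pfg by simp
      have lf: "length f = k" "li (map ?h f)" using fF by auto
      have lg: "length g = CARD('n) - 2*k" "set g \<subseteq> ?K" "li (map ?h f @ g)" using gG by auto
      have liP: "li P" unfolding P by (rule key_li[OF sq k lf lg])
      have len: "length P = CARD('n)" using P lf lg kn by simp
      have "relk k D P" unfolding relk_def P using lf(1) lg(2) sqz[OF sq] by auto
      then show "P \<in> ?X" using liP len by simp
    qed
  qed
  have inj: "inj_on ?m (SIGMA f:?F. ?G f)"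
  proof (rule inj_onI)
    fix p p' assume p: "p \<in> (SIGMA f:?F. ?G f)" and p': "p' \<in> (SIGMA f:?F. ?G f)" and e: "?m p = ?m p'"
    obtain f g where pfg: "p = (f, g)" by (cases p)
    obtain f' g' where pfg': "p' = (f', g')" by (cases p')
    have "length f = k" "length f' = k" using p p' pfg pfg' by auto
    then show "p = p'" using e pfg pfg' by auto
  qed
  have cG: "card (?G f) = (\<Prod>i<CARD('n) - 2*k. CARD('a) ^ (CARD('n) - k) - CARD('a) ^ (k + i))"
    if fF: "f \<in> ?F" for f
  proof -
    have sub: "set (map ?h f) \<subseteq> ?K" using sqz[OF sq] by auto
    have "card (?G f) = (\<Prod>i<CARD('n) - 2*k. CARD('a) ^ vec.dim ?K - CARD('a) ^ (length (map ?h f) + i))"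
      using count_ext[OF vec.subspace_kernel[of D] sub, where l="CARD('n) - 2*k"] fF by simp
    then show ?thesis using fF dK by simp
  qed
  have "card ?X = card (SIGMA f:?F. ?G f)" unfolding eq using card_image[OF inj] .
  also have "\<dots> = (\<Sum>f\<in>?F. card (?G f))"
    by (rule card_SigmaI) (auto intro: finite_lists_fin)
  also have "\<dots> = card ?F * (\<Prod>i<CARD('n) - 2*k. CARD('a) ^ (CARD('n) - k) - CARD('a) ^ (k + i))"
    using cG by simp
  finally show ?thesis .
qed

lemma relk_nth:
  fixes D :: "'a::field^'n^'n"
  assumes len: "length P = N" and kn: "2 * k \<le> N"
  shows "relk k D P \<longleftrightarrow> (\<forall>i<N. D *v P!i = (if i < k then P!(k+i) else 0))"
proof -
  have A: "map ((*v) D) (take k P) = take k (drop k P) \<longleftrightarrow> (\<forall>i<k. D *v P!i = P!(k+i))"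
  proof -
    have l1: "length (map ((*v) D) (take k P)) = k" using len kn by simp
    have l2: "length (take k (drop k P)) = k" using len kn by simp
    have n1: "map ((*v) D) (take k P) ! i = D *v P ! i" if "i < k" for i using that l1 by simp
    have n2: "take k (drop k P) ! i = P ! (k + i)" if "i < k" for i using that l2 by simp
    show ?thesis unfolding list_eq_iff_nth_eq l1 l2 using n1 n2 by simp
  qed
  have B: "(\<forall>x\<in>set (drop k P). D *v x = 0) \<longleftrightarrow> (\<forall>i. k \<le> i \<and> i < N \<longrightarrow> D *v P!i = 0)"
  proof
    assume H: "\<forall>x\<in>set (drop k P). D *v x = 0"
    show "\<forall>i. k \<le> i \<and> i < N \<longrightarrow> D *v P!i = 0"
    proof (intro allI impI)
      fix i assume i: "k \<le> i \<and> i < N"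
      then have "P ! i = drop k P ! (i - k)" using len by simp
      moreover have "i - k < length (drop k P)" using i len by (simp add: diff_less_mono)
      ultimately have "P ! i \<in> set (drop k P)" by (metis nth_mem)
      then show "D *v P!i = 0" using H by blast
    qed
  next
    assume H: "\<forall>i. k \<le> i \<and> i < N \<longrightarrow> D *v P!i = 0"
    show "\<forall>x\<in>set (drop k P). D *v x = 0"
    proof
      fix x assume "x \<in> set (drop k P)"
      then obtain j where j: "j < length (drop k P)" "x = drop k P ! j" by (metis in_set_conv_nth)
      then show "D *v x = 0" using H len by simp
    qed
  qed
  have C: "((\<forall>i<k. D *v P!i = P!(k+i)) \<and> (\<forall>i. k \<le> i \<and> i < N \<longrightarrow> D *v P!i = 0))
     \<longleftrightarrow> (\<forall>i<N. D *v P!i = (if i < k then P!(k+i) else 0))"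
  proof
    assume H: "(\<forall>i<k. D *v P!i = P!(k+i)) \<and> (\<forall>i. k \<le> i \<and> i < N \<longrightarrow> D *v P!i = 0)"
    show "\<forall>i<N. D *v P!i = (if i < k then P!(k+i) else 0)"
    proof (intro allI impI)
      fix i assume "i < N"
      then show "D *v P!i = (if i < k then P!(k+i) else 0)" using H by (cases "i < k") auto
    qed
  next
    assume H: "\<forall>i<N. D *v P!i = (if i < k then P!(k+i) else 0)"
    have "\<forall>i<k. D *v P!i = P!(k+i)"
    proof (intro allI impI)
      fix i assume i: "i < k"
      then have "i < N" using kn by linarith
      then show "D *v P!i = P!(k+i)" using H i by simp
    qed
    moreover have "\<forall>i. k \<le> i \<and> i < N \<longrightarrow> D *v P!i = 0" using H by auto
    ultimately show "(\<forall>i<k. D *v P!i = P!(k+i)) \<and> (\<forall>i. k \<le> i \<and> i < N \<longrightarrow> D *v P!i = 0)" by blast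
  qed
  show ?thesis unfolding relk_def A B C ..
qed

lemma basis_span:
  fixes P :: "('a::{field,finite}^'n::finite) list"
  assumes "length P = CARD('n)" "li P"
  shows "vec.span (set P) = UNIV"
proof -
  have c: "card (set P) = CARD('n)" using assms distinct_card unfolding li_def by metis
  have "UNIV \<subseteq> vec.span (set P)"
    using vec.card_ge_dim_independent[of "set P" UNIV] assms c
    unfolding li_def by (auto simp: card_cart_basis)
  then show ?thesis by auto
qed

lemma mat_eq_on_basis:
  fixes D D' :: "'a::{field,finite}^'n::finite^'n"
  assumes "length P = CARD('n)" "li P" "\<And>x. x \<in> set P \<Longrightarrow> D *v x = D' *v x"
  shows "D = D'"
proof -
  have "D *v x = D' *v x" for x
    using vec.linear_eq_on[OF matrix_vector_mul_linear_gen matrix_vector_mul_linear_gen, of x "set P"]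
      basis_span[OF assms(1,2)] assms(3) by auto
  then show ?thesis by (simp add: matrix_eq)
qed

lemma relk_props:
  fixes D :: "'a::{field,finite}^'n::finite^'n"
  assumes len: "length P = CARD('n)" and liP: "li P" and kn: "2 * k \<le> CARD('n)" and rel: "relk k D P"
  shows "D ** D = 0 \<and> vec.dim (range ((*v) D)) = k"
proof -
  let ?h = "(*v) D"
  have nth: "\<forall>i<CARD('n). D *v P!i = (if i < k then P!(k+i) else 0)"
    using relk_nth[OF len kn] rel by blast
  have "D ** D = 0"
  proof (rule mat_eq_on_basis[OF len liP])
    fix x assume "x \<in> set P"
    then obtain i where i: "i < CARD('n)" "x = P!i" using len by (metis in_set_conv_nth)
    show "(D ** D) *v x = 0 *v x"
    proof (cases "i < k")
      case True
      then have "D *v x = P!(k+i)" using nth i by auto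
      moreover have "D *v P!(k+i) = 0" using nth True kn by auto
      ultimately show ?thesis by (simp add: matrix_vector_mul_assoc[symmetric])
    next
      case False
      then show ?thesis using nth i by (simp add: matrix_vector_mul_assoc[symmetric])
    qed
  qed
  moreover have "vec.dim (range ?h) = k"
  proof -
    let ?T = "take k (drop k P)"
    have T: "?T = map ?h (take k P)" using rel unfolding relk_def by simp
    have r: "range ?h = ?h ` vec.span (set P)" using basis_span[OF len liP] by simp
    also have "\<dots> = vec.span (?h ` set P)" by (simp add: vec.span_image)
    also have "\<dots> = vec.span (set ?T)"
    proof -
      have a: "set ?T \<subseteq> vec.span (?h ` set P)"
        unfolding T using set_take_subset[of k P] vec.span_superset by fastforce
      have b: "?h ` set P \<subseteq> vec.span (set ?T)"
      proof
        fix y assume "y \<in> ?h ` set P"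
        then obtain i where i: "i < CARD('n)" "y = ?h (P!i)" using len by (metis imageE in_set_conv_nth)
        show "y \<in> vec.span (set ?T)"
        proof (cases "i < k")
          case True
          then have "y = ?T ! i" using nth i kn len by simp
          moreover have "i < length ?T" using True kn len by simp
          ultimately show ?thesis by (metis nth_mem vec.span_base)
        next
          case False
          then show ?thesis using nth i vec.span_zero by simp
        qed
      qed
      show ?thesis using vec.span_minimal[OF a vec.subspace_span] vec.span_minimal[OF b vec.subspace_span] by blast
    qed
    finally have "vec.dim (range ?h) = vec.dim (set ?T)" by simp
    also have "\<dots> = card (set ?T)"
    proof (rule vec.dim_eq_card_independent)
      have "set ?T \<subseteq> set P" by (meson set_drop_subset set_take_subset subset_trans)
      then show "vec.independent (set ?T)" using liP vec.independent_mono unfolding li_def by blast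
    qed
    also have "\<dots> = k"
    proof -
      have "distinct ?T" using liP unfolding li_def by (simp add: distinct_drop distinct_take)
      then show ?thesis using distinct_card len kn by fastforce
    qed
    finally show ?thesis .
  qed
  ultimately show ?thesis by blast
qed

lemma relk_exists:
  fixes P :: "('a::{field,finite}^'n::finite) list"
  assumes len: "length P = CARD('n)" and liP: "li P" and kn: "2 * k \<le> CARD('n)"
  shows "\<exists>D. relk k D P"
proof -
  let ?V = "take k (drop k P) @ replicate (CARD('n) - k) (0::'a^'n)"
  define \<phi> where "\<phi> x = (case map_of (zip P ?V) x of Some v \<Rightarrow> v | None \<Rightarrow> 0)" for x
  let ?L = "vec.construct (set P) \<phi>"
  define D where "D = matrix ?L"
  have indP: "vec.independent (set P)" and dP: "distinct P" using liP unfolding li_def by auto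
  have lin: "Vector_Spaces.linear (*s) (*s) ?L" using vec.linear_construct[OF indP] .
  have lenV: "length ?V = CARD('n)" using kn len by simp
  have "D *v P!i = ?V ! i" if i: "i < CARD('n)" for i
  proof -
    have "D *v P!i = ?L (P!i)" unfolding D_def using matrix_works[OF lin] by simp
    also have "\<dots> = \<phi> (P!i)" using vec.construct_basis[OF indP, of "P!i"] i len by simp
    also have "\<dots> = ?V ! i" unfolding \<phi>_def using map_of_zip_nth[of P ?V i] len lenV dP i by simp
    finally show ?thesis .
  qed
  then have "\<forall>i<CARD('n). D *v P!i = (if i < k then P!(k+i) else 0)"
    using kn len by (auto simp: nth_append)
  then show ?thesis using relk_nth[OF len kn] by blast
qed

lemma relk_unique:
  fixes D D' :: "'a::{field,finite}^'n::finite^'n"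
  assumes len: "length P = CARD('n)" and liP: "li P" and kn: "2 * k \<le> CARD('n)"
    and r: "relk k D P" "relk k D' P"
  shows "D = D'"
proof (rule mat_eq_on_basis[OF len liP])
  fix x assume "x \<in> set P"
  then obtain i where i: "i < CARD('n)" "x = P!i" using len by (metis in_set_conv_nth)
  then show "D *v x = D' *v x" using r relk_nth[OF len kn] by simp
qed

definition Nk :: "nat \<Rightarrow> nat \<Rightarrow> nat \<Rightarrow> nat" where
  "Nk q n k = q ^ ((n - k) * k) * (\<Prod>i<k. q ^ k - q ^ i) * (\<Prod>i<n - 2*k. q ^ (n - k) - q ^ (k + i))"

lemma double_count:
  assumes kn: "2 * k \<le> CARD('n::finite)"
  shows "card {D::'a::{field,finite}^'n^'n. D ** D = 0 \<and> vec.dim (range ((*v) D)) = k}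
           * Nk CARD('a) CARD('n) k
         = (\<Prod>i<CARD('n). CARD('a) ^ CARD('n) - CARD('a) ^ i)"
proof -
  let ?C = "{D::'a^'n^'n. D ** D = 0 \<and> vec.dim (range ((*v) D)) = k}"
  let ?B = "{P::('a^'n) list. length P = CARD('n) \<and> li P}"
  let ?S1 = "SIGMA P:?B. {D::'a^'n^'n. relk k D P}"
  let ?S2 = "SIGMA D:?C. {P. length P = CARD('n) \<and> li P \<and> relk k D P}"
  have cB: "card ?B = (\<Prod>i<CARD('n). CARD('a) ^ CARD('n) - CARD('a) ^ i)"
    using count_ext[OF vec.subspace_UNIV, where A="[]" and l="CARD('n)" and 'a='a and 'n='n]
    by (simp add: li_def vec.independent_empty card_cart_basis)
  have single: "card {D::'a^'n^'n. relk k D P} = 1" if P: "P \<in> ?B" for P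
  proof -
    obtain D0 where D0: "relk k D0 P" using relk_exists[of P k] P kn by auto
    have "{D::'a^'n^'n. relk k D P} = {D0}"
      using D0 relk_unique[of P k] P kn by auto
    then show ?thesis by simp
  qed
  have "card ?S1 = (\<Sum>P\<in>?B. card {D::'a^'n^'n. relk k D P})"
    by (rule card_SigmaI) (auto intro: finite_lists_fin)
  also have "\<dots> = card ?B" using single by simp
  finally have c1: "card ?S1 = card ?B" .
  have fib: "card {P. length P = CARD('n) \<and> li P \<and> relk k D P} = Nk CARD('a) CARD('n) k" if D: "D \<in> ?C" for D
    using fiber_count[of D k] count_F[of D k] D unfolding Nk_def by simp
  have "card ?S2 = (\<Sum>D\<in>?C. card {P. length P = CARD('n) \<and> li P \<and> relk k D P})"
    by (rule card_SigmaI) (auto intro: finite_lists_fin)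
  also have "\<dots> = card ?C * Nk CARD('a) CARD('n) k" using fib by simp
  finally have c2: "card ?S2 = card ?C * Nk CARD('a) CARD('n) k" .
  have eq: "?S1 = (\<lambda>(D,P). (P,D)) ` ?S2"
  proof
    show "?S1 \<subseteq> (\<lambda>(D,P). (P,D)) ` ?S2"
    proof
      fix x assume x: "x \<in> ?S1"
      obtain P D where xPD: "x = (P, D)" by (cases x)
      have P: "P \<in> ?B" and r: "relk k D P" using x unfolding xPD by auto
      have "D \<in> ?C" using relk_props[of P k D] P r kn by auto
      then show "x \<in> (\<lambda>(D,P). (P,D)) ` ?S2" using P r xPD by (auto intro!: image_eqI[of _ _ "(D,P)"])
    qed
  next
    show "(\<lambda>(D,P). (P,D)) ` ?S2 \<subseteq> ?S1" by auto
  qed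
  have inj: "inj_on (\<lambda>(D,P). (P,D)) ?S2" by (rule inj_onI) auto
  have "card ?S1 = card ?S2" unfolding eq using card_image[OF inj] .
  then show ?thesis using c1 c2 cB by simp
qed

lemma homology_dim_sq:
  fixes D :: "'a::{field,finite}^'n::finite^'n"
  assumes "D ** D = 0"
  shows "homology_dim D = CARD('n) - 2 * vec.dim (range ((*v) D))"
  using rank_nullity[of D] unfolding homology_dim_def by simp

lemma c_hom_eq:
  fixes T :: "('a::{field,finite}^'n::finite^'n) itself"
  assumes "2 * k + r = CARD('n)"
  shows "c_hom T r = card {D::'a^'n^'n. D ** D = 0 \<and> vec.dim (range ((*v) D)) = k}"
proof -
  have "{D::'a^'n^'n. is_differential D \<and> homology_dim D = r}
      = {D::'a^'n^'n. D ** D = 0 \<and> vec.dim (range ((*v) D)) = k}"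
  proof (intro Collect_cong iffI conjI)
    fix D :: "'a^'n^'n"
    assume H: "is_differential D \<and> homology_dim D = r"
    then have sq: "D ** D = 0" unfolding is_differential_def by simp
    show "D ** D = 0" using sq .
    have "2 * vec.dim (range ((*v) D)) \<le> CARD('n)" using two_k_le[OF sq refl] .
    moreover have "CARD('n) - 2 * vec.dim (range ((*v) D)) = r" using H homology_dim_sq[OF sq] by simp
    ultimately show "vec.dim (range ((*v) D)) = k" using assms by arith
  next
    fix D :: "'a^'n^'n"
    assume H: "D ** D = 0 \<and> vec.dim (range ((*v) D)) = k"
    then show "is_differential D" unfolding is_differential_def by simp
    show "homology_dim D = r" using H homology_dim_sq[of D] assms by simp
  qed
  then show ?thesis unfolding c_hom_def by simp
qed

definition GG :: "real \<Rightarrow> nat \<Rightarrow> real" where "GG q t = (\<Prod>j=1..t. q ^ j - 1)"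
definition SS :: "nat \<Rightarrow> nat" where "SS t = (\<Sum>i<t. i)"

lemma SS_0[simp]: "SS 0 = 0" by (simp add: SS_def)

lemma SS_twice: "2 * SS t + t = t * t"
  by (induction t) (auto simp: SS_def algebra_simps)

lemma T_twice: "2 * (\<Sum>j=1..s. m + j) = 2 * s * m + s * s + (s::nat)"
  by (induction s) (auto simp: algebra_simps)

lemma GG_Suc: "GG q (Suc k) = GG q k * (q ^ Suc k - 1)"
  unfolding GG_def by simp

lemma R1: "(\<Prod>i<k. q ^ k - q ^ i) = (q::real) ^ SS k * GG q k"
proof (induction k)
  case 0
  then show ?case by (simp add: GG_def SS_def)
next
  case (Suc k)
  have "(\<Prod>i<Suc k. q ^ Suc k - q ^ i) = (\<Prod>i<k. q ^ Suc k - q ^ Suc i) * (q ^ Suc k - q ^ 0)"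
    by (simp only: prod.lessThan_Suc_shift) (simp add: mult.commute)
  also have "(\<Prod>i<k. q ^ Suc k - q ^ Suc i) = (\<Prod>i<k. q * (q ^ k - q ^ i))"
    by (simp add: algebra_simps)
  also have "\<dots> = q ^ k * (\<Prod>i<k. q ^ k - q ^ i)"
    by (simp add: prod.distrib)
  finally show ?case using Suc.IH by (simp add: GG_Suc SS_def power_add algebra_simps)
qed

lemma R2: "(\<Prod>i<l. (q::real) ^ (a + l) - q ^ (a + i)) = q ^ (a * l) * (\<Prod>i<l. q ^ l - q ^ i)"
proof -
  have "(\<Prod>i<l. q ^ (a + l) - q ^ (a + i)) = (\<Prod>i<l. q ^ a * (q ^ l - q ^ i))"
    by (simp add: power_add algebra_simps)
  also have "\<dots> = q ^ (a * l) * (\<Prod>i<l. q ^ l - q ^ i)"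
    by (simp add: prod.distrib power_mult)
  finally show ?thesis .
qed

lemma R3: "GG q (m + s) = GG q m * (\<Prod>j=1..s. q ^ (m + j) - 1)"
  by (induction s) (simp_all add: GG_def)

lemma prod_nat_diff:
  assumes "1 \<le> q" "\<And>i. i \<in> A \<Longrightarrow> b i \<le> a i"
  shows "real (\<Prod>i\<in>A. (q::nat) ^ a i - q ^ b i) = (\<Prod>i\<in>A. real q ^ a i - real q ^ b i)"
proof -
  have "\<And>i. i \<in> A \<Longrightarrow> real (q ^ a i - q ^ b i) = real q ^ a i - real q ^ b i"
    using assms by (simp add: of_nat_diff power_increasing)
  then show ?thesis unfolding of_nat_prod by (rule prod.cong[OF refl])
qed

lemma Nk_real:
  assumes q: "1 \<le> q" and kn: "2 * k \<le> n"
  shows "real (Nk q n k) = real q ^ ((n - k) * k + SS k + k * (n - 2*k) + SS (n - 2*k))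
          * GG (real q) k * GG (real q) (n - 2*k)"
proof -
  let ?Q = "real q"
  have a: "real (\<Prod>i<k. q ^ k - q ^ i) = (\<Prod>i<k. ?Q ^ k - ?Q ^ i)"
    by (rule prod_nat_diff) (use q in auto)
  have b: "real (\<Prod>i<n - 2*k. q ^ (n - k) - q ^ (k + i)) = (\<Prod>i<n - 2*k. ?Q ^ (n - k) - ?Q ^ (k + i))"
    by (rule prod_nat_diff) (use q kn in auto)
  have nk: "n - k = k + (n - 2*k)" using kn by simp
  have c: "(\<Prod>i<n - 2*k. ?Q ^ (n - k) - ?Q ^ (k + i)) = ?Q ^ (k * (n - 2*k)) * (?Q ^ SS (n - 2*k) * GG ?Q (n - 2*k))"
    unfolding nk using R2[of ?Q k "n - 2*k"] R1 by simp
  show ?thesis unfolding Nk_def of_nat_mult a b c R1 by (simp add: power_add algebra_simps)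
qed

lemma ratio_main:
  assumes q: "2 \<le> q" and n: "n = 2 * m + 2 * s"
  shows "real (Nk q n (m + s)) / real (Nk q n m) = ratio_formula (real q) m (2 * s)"
proof -
  let ?Q = "real q"
  have Q: "?Q \<ge> 2" using q by simp
  have Gpos: "GG ?Q t > 0" for t
    unfolding GG_def
  proof (rule prod_pos)
    fix j assume "j \<in> {1..t}"
    then have "?Q ^ 1 \<le> ?Q ^ j" using Q by (intro power_increasing) auto
    then show "0 < ?Q ^ j - 1" using Q power_one_right[of ?Q] by linarith
  qed
  define EA where "EA = (n - (m+s)) * (m+s) + SS (m+s) + (m+s) * (n - 2*(m+s)) + SS (n - 2*(m+s))"
  define EB where "EB = (n - m) * m + SS m + m * (n - 2*m) + SS (n - 2*m)"
  define T where "T = (\<Sum>j=1..s. m + j)"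
  define H where "H = (\<Prod>j=1..s. ?Q ^ (m + j) - 1)"
  have N1: "real (Nk q n (m + s)) = ?Q ^ EA * GG ?Q (m + s)"
    using Nk_real[of q "m+s" n] q n unfolding EA_def by (simp add: GG_def)
  have N0: "real (Nk q n m) = ?Q ^ EB * GG ?Q m * GG ?Q (2 * s)"
    using Nk_real[of q m n] q n unfolding EB_def by simp
  have expo: "EA + T = s + EB"
  proof -
    have e1: "EA = (m+s)*(m+s) + SS (m+s)" unfolding EA_def n by simp
    have e0: "EB = (m + 2 * s) * m + SS m + m * (2 * s) + SS (2 * s)" unfolding EB_def n by simp
    have h1: "2 * SS (m+s) + (m+s) = (m+s)*(m+s)" by (rule SS_twice)
    have h2: "2 * SS m + m = m*m" by (rule SS_twice)
    have h3: "2 * SS (2 * s) + 2 * s = (2 * s)*(2 * s)" by (rule SS_twice)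
    have h4: "2 * T = 2 * s * m + s * s + s" unfolding T_def by (rule T_twice)
    have "2 * (EA + T) = 2 * (s + EB)"
      using h1 h2 h3 h4 unfolding e1 e0 by (simp add: algebra_simps)
    then show ?thesis by simp
  qed
  have P: "(\<Prod>j=1..s. 1 - 1 / ?Q ^ (m + j)) = H / ?Q ^ T"
  proof -
    have "(\<Prod>j=1..s. 1 - 1 / ?Q ^ (m + j)) = (\<Prod>j=1..s. (?Q ^ (m + j) - 1) / ?Q ^ (m + j))"
      using Q by (intro prod.cong) (auto simp: field_simps)
    also have "\<dots> = H / (\<Prod>j=1..s. ?Q ^ (m + j))" unfolding H_def by (rule prod_dividef)
    also have "(\<Prod>j=1..s. ?Q ^ (m + j)) = ?Q ^ T" unfolding T_def by (simp add: power_sum)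
    finally show ?thesis .
  qed
  have RF: "ratio_formula ?Q m (2 * s) = ?Q ^ s / GG ?Q (2 * s) * (H / ?Q ^ T)"
    using P by (simp add: ratio_formula_def GG_def)
  have G: "GG ?Q (m + s) = GG ?Q m * H" unfolding H_def by (rule R3)
  have QE: "?Q ^ EA * ?Q ^ T = ?Q ^ s * ?Q ^ EB" using expo by (metis power_add)
  have pos: "?Q ^ T > 0" "?Q ^ EB > 0" "GG ?Q m > 0" "GG ?Q (2 * s) > 0" using Q Gpos by auto
  have QA: "?Q ^ EA = ?Q ^ s * ?Q ^ EB / ?Q ^ T" using QE pos(1) by (simp add: eq_divide_eq)
  define a where "a = ?Q ^ s"
  define b where "b = ?Q ^ EB"
  define c where "c = ?Q ^ T"
  define g1 where "g1 = GG ?Q m"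
  define g2 where "g2 = GG ?Q (2 * s)"
  have nz: "b \<noteq> 0" "c \<noteq> 0" "g1 \<noteq> 0" "g2 \<noteq> 0" using pos unfolding b_def c_def g1_def g2_def by auto
  have "a * b / c * (g1 * H) / (b * g1 * g2) = a / g2 * (H / c)"
    using nz by (simp add: field_simps)
  then show ?thesis unfolding N1 N0 RF G QA a_def[symmetric] b_def[symmetric] c_def[symmetric] g1_def[symmetric] g2_def[symmetric] .
qed

lemma gauss2: "2 * (\<Sum>j=1..t. j) = t * (t + 1::nat)"
  by (induction t) auto

lemma asym_part:
  assumes r: "even r" "r \<ge> 2"
  shows "(\<lambda>q::nat. ratio_formula (real q) m r) \<sim>[at_top] (\<lambda>q. 1 / real q ^ (r\<^sup>2 div 2))"
proof -
  obtain s where rs: "r = 2 * s" using r by (auto elim: evenE)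
  define F where "F q = (\<Prod>j=1..2 * s. 1 / (1 - (1 / real q) ^ j)) * (\<Prod>j=1..s. 1 - (1 / real q) ^ (m + j))" for q :: nat
  have lim0: "((\<lambda>q::nat. (1 / real q) ^ j) \<longlongrightarrow> 0) at_top" if "j \<ge> 1" for j
    by (rule tendsto_eq_rhs[OF tendsto_power[OF lim_1_over_n]]) (use that in simp)
  have "(F \<longlongrightarrow> (\<Prod>j=1..2 * s. 1 / (1 - 0)) * (\<Prod>j=1..s. 1 - 0)) at_top"
    unfolding F_def
    by (intro tendsto_mult tendsto_prod tendsto_divide tendsto_diff tendsto_const lim0) auto
  then have FL: "(F \<longlongrightarrow> 1) at_top" by simp
  have ev: "eventually (\<lambda>q. ratio_formula (real q) m r / (1 / real q ^ (r\<^sup>2 div 2)) = F q) at_top"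
  proof (rule eventually_at_top_linorderI[of 2])
    fix q :: nat assume q: "q \<ge> 2"
    let ?Q = "real q"
    have Q: "?Q \<ge> 2" using q by simp
    have pos: "?Q ^ j - 1 > 0" if "j \<ge> 1" for j
    proof -
      have "?Q ^ 1 \<le> ?Q ^ j" using Q that by (intro power_increasing) auto
      then show ?thesis using Q power_one_right[of ?Q] by linarith
    qed
    have e: "r\<^sup>2 div 2 = 2 * s * s" unfolding rs by (simp add: power2_eq_square)
    have sum: "(\<Sum>j=1..2 * s. j) = s + 2 * s * s" using gauss2[of "2 * s"] by simp
    have A: "(\<Prod>j=1..2 * s. 1 / (1 - (1 / ?Q) ^ j)) = (\<Prod>j=1..2 * s. ?Q ^ j / (?Q ^ j - 1))"
    proof (rule prod.cong[OF refl])
      fix j assume "j \<in> {1..2 * s}"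
      then have "?Q ^ j - 1 > 0" using pos by auto
      then show "1 / (1 - (1 / ?Q) ^ j) = ?Q ^ j / (?Q ^ j - 1)"
        using Q by (simp add: field_simps power_one_over)
    qed
    also have "\<dots> = (\<Prod>j=1..2 * s. ?Q ^ j) / (\<Prod>j=1..2 * s. ?Q ^ j - 1)"
      by (rule prod_dividef)
    also have "(\<Prod>j=1..2 * s. ?Q ^ j) = ?Q ^ s * ?Q ^ (2 * s * s)"
    proof -
      have "(\<Prod>j=1..2 * s. ?Q ^ j) = ?Q ^ (\<Sum>j=1..2 * s. j)" by (rule power_sum[symmetric])
      also have "\<dots> = ?Q ^ (s + 2 * s * s)" unfolding sum ..
      finally show ?thesis by (simp add: power_add)
    qed
    finally have A': "(\<Prod>j=1..2 * s. 1 / (1 - (1 / ?Q) ^ j)) = ?Q ^ s * ?Q ^ (2 * s * s) / (\<Prod>j=1..2 * s. ?Q ^ j - 1)" .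
    have B: "(\<Prod>j=1..s. 1 - (1 / ?Q) ^ (m + j)) = (\<Prod>j=1..s. 1 - 1 / ?Q ^ (m + j))"
      by (simp add: power_one_over)
    have "ratio_formula ?Q m r / (1 / ?Q ^ (r\<^sup>2 div 2))
        = ?Q ^ s / (\<Prod>j=1..2 * s. ?Q ^ j - 1) * (\<Prod>j=1..s. 1 - 1 / ?Q ^ (m + j)) * ?Q ^ (2 * s * s)"
      unfolding ratio_formula_def e rs by (simp add: power2_eq_square mult.assoc)
    also have "\<dots> = F q" unfolding F_def A' B by (simp add: field_simps)
    finally show "ratio_formula ?Q m r / (1 / ?Q ^ (r\<^sup>2 div 2)) = F q" .
  qed
  have "((\<lambda>q. ratio_formula (real q) m r / (1 / real q ^ (r\<^sup>2 div 2))) \<longlongrightarrow> 1) at_top"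
    using tendsto_cong[OF ev] FL by simp
  then show ?thesis by (rule asymp_equivI')
qed

lemma prod_diff_pos:
  assumes q: "2 \<le> (q::nat)" and h: "\<And>i. i \<in> A \<Longrightarrow> b i < a i"
  shows "0 < (\<Prod>i\<in>A. q ^ a i - q ^ b i)"
proof (rule prod_pos)
  fix i assume "i \<in> A"
  then have "q ^ b i < q ^ a i" using h q by (intro power_strict_increasing) auto
  then show "0 < q ^ a i - q ^ b i" by simp
qed

lemma Nk_pos:
  assumes q: "2 \<le> q" and kn: "2 * k \<le> n"
  shows "0 < Nk q n k"
proof -
  have "0 < (\<Prod>i<k. q ^ k - q ^ i)" by (rule prod_diff_pos[OF q]) auto
  moreover have "0 < (\<Prod>i<n - 2*k. q ^ (n - k) - q ^ (k + i))" by (rule prod_diff_pos[OF q]) (use kn in auto)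
  moreover have "0 < q ^ ((n - k) * k)" using q by simp
  ultimately show ?thesis unfolding Nk_def by simp
qed

lemma div_div_cancel: "(a::real) \<noteq> 0 \<Longrightarrow> b \<noteq> 0 \<Longrightarrow> c \<noteq> 0 \<Longrightarrow> (a / b) / (a / c) = c / b"
  by (simp add: field_simps)

theorem mainTheorem6:
  fixes T :: "('a::{field,finite}^'n::finite^'n) itself" and m r :: nat
  assumes "even r" and "r \<ge> 2" and "CARD('n) = 2 * m + r"
  shows "p_hom T r / p_hom T 0 = real (c_hom T r) / real (c_hom T 0)
       \<and> real (c_hom T r) / real (c_hom T 0) = ratio_formula (real CARD('a)) m r
       \<and> (\<lambda>q::nat. ratio_formula (real q) m r) \<sim>[at_top] (\<lambda>q. 1 / real q ^ (r\<^sup>2 div 2))"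
proof -
  obtain s where rs: "r = 2 * s" using assms(1) by (auto elim: evenE)
  let ?q = "CARD('a)" and ?n = "CARD('n)"
  let ?C = "\<lambda>k. card {D::'a^'n^'n. D ** D = 0 \<and> vec.dim (range ((*v) D)) = k}"
  let ?GL = "(\<Prod>i<?n. ?q ^ ?n - ?q ^ i)"
  have q: "2 \<le> ?q" by (rule card_field_ge2)
  have n: "?n = 2 * m + 2 * s" using assms(3) rs by simp
  have cm: "c_hom T r = ?C m" by (rule c_hom_eq) (use assms(3) in simp)
  have c0: "c_hom T 0 = ?C (m + s)" by (rule c_hom_eq) (use n in simp)
  have dm: "?C m * Nk ?q ?n m = ?GL" by (rule double_count) (use n in simp)
  have ds: "?C (m + s) * Nk ?q ?n (m + s) = ?GL" by (rule double_count) (use n in simp)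
  have GLpos: "0 < ?GL" by (rule prod_diff_pos[OF q]) auto
  have Nm: "0 < Nk ?q ?n m" by (rule Nk_pos[OF q]) (use n in simp)
  have Ns: "0 < Nk ?q ?n (m + s)" by (rule Nk_pos[OF q]) (use n in simp)
  have rm: "real (?C m) = real ?GL / real (Nk ?q ?n m)"
    using dm Nm by (simp add: eq_divide_eq flip: of_nat_mult)
  have rsx: "real (?C (m + s)) = real ?GL / real (Nk ?q ?n (m + s))"
    using ds Ns by (simp add: eq_divide_eq flip: of_nat_mult)
  have ratio: "real (c_hom T r) / real (c_hom T 0) = real (Nk ?q ?n (m + s)) / real (Nk ?q ?n m)"
  proof -
    have g0: "real ?GL \<noteq> 0" using GLpos by (metis of_nat_0_less_iff less_irrefl)
    have n1: "real (Nk ?q ?n m) \<noteq> 0" using Nm by simp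
    have n2: "real (Nk ?q ?n (m + s)) \<noteq> 0" using Ns by simp
    show ?thesis unfolding cm c0 rm rsx using div_div_cancel[OF g0 n1 n2] .
  qed
  have second: "real (c_hom T r) / real (c_hom T 0) = ratio_formula (real ?q) m r"
    using ratio ratio_main[OF q n] rs by simp
  have call: "c_all T > 0"
  proof -
    have "(0::'a^'n^'n) \<in> {D. is_differential D}" unfolding is_differential_def by simp
    then show ?thesis unfolding c_all_def by (auto simp: card_gt_0_iff)
  qed
  have first: "p_hom T r / p_hom T 0 = real (c_hom T r) / real (c_hom T 0)"
    unfolding p_hom_def using call by simp
  show ?thesis using first second asym_part[OF assms(1,2), of m] by blast
qed

end
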